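(* Let $A$ be a Banach algebra with $\mathrm{Ann}_l(A)=\{0\}$ and let $a_0\in Z(A)\setminus\{0\}$. Then for each integer $n\geq 3$, $S_{n}(A)$ is a commutative Banach subalgebra of $B(A)$.
   Context: $Z(A)$ is the center of $A$; $\mathrm{Ann}_l(A)=\{a\in A: ab=0\text{ for all }b\in A\}$. $Mul_n(A)$ is the set of bounded linear maps $T:A\to A$ with $T(a_1\cdots a_n)=a_1T(a_2\cdots a_n)=T(a_1\cdots a_{n-1})a_n$ for all $a_i\in A$. For $T\in Mul_n(A)$ let $T_{a_0,n}\in B(A)$ be $T_{a_0,n}(a)=T(a_0^{n-2}a)$; $M_{a_0,n}(A)=\{T_{a_0,n}:T\in Mul_n(A)\}$, and $S_n(A)$ is the closure of $M_{a_0,n}(A)$ in $B(A)$ in the operator norm. *)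

theory Defs
  imports "HOL-Analysis.Analysis"
begin

text \<open>Ordered product of a nonempty list in a (possibly non-unital) algebra.\<close>
fun lprod :: "'a::times list \<Rightarrow> 'a" where
  "lprod [] = undefined"
| "lprod [x] = x"
| "lprod (x # y # xs) = x * lprod (y # xs)"

definition center :: "'a::times set" where
  "center = {z. \<forall>a. z * a = a * z}"

definition left_ann :: "'a::{times,zero} set" where
  "left_ann = {a. \<forall>b. a * b = 0}"

definition Mul_n :: "nat \<Rightarrow> ('a::real_normed_algebra \<Rightarrow>\<^sub>L 'a) set" where
  "Mul_n n = {T. \<forall>xs::'a list. length xs = n \<longrightarrow>
      blinfun_apply T (lprod xs) = hd xs * blinfun_apply T (lprod (tl xs)) \<and>
      blinfun_apply T (lprod xs) = blinfun_apply T (lprod (butlast xs)) * last xs}"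

definition T_a0n :: "'a::real_normed_algebra \<Rightarrow> nat \<Rightarrow> ('a \<Rightarrow>\<^sub>L 'a) \<Rightarrow> ('a \<Rightarrow>\<^sub>L 'a)" where
  "T_a0n a0 n T = T o\<^sub>L blinfun_mult_right (lprod (replicate (n - 2) a0))"

definition M_a0n :: "'a::real_normed_algebra \<Rightarrow> nat \<Rightarrow> ('a \<Rightarrow>\<^sub>L 'a) set" where
  "M_a0n a0 n = T_a0n a0 n ` Mul_n n"

definition S_n :: "'a::real_normed_algebra \<Rightarrow> nat \<Rightarrow> ('a \<Rightarrow>\<^sub>L 'a) set" where
  "S_n a0 n = closure (M_a0n a0 n)"

text \<open>A commutative Banach subalgebra of B(A): a closed (hence complete) linear
  subspace closed under composition, whose elements commute.\<close>
definition comm_banach_subalgebra :: "('a::real_normed_vector \<Rightarrow>\<^sub>L 'a) set \<Rightarrow> bool" where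
  "comm_banach_subalgebra S \<longleftrightarrow>
     subspace S \<and> closed S \<and>
     (\<forall>T\<in>S. \<forall>U\<in>S. T o\<^sub>L U \<in> S) \<and>
     (\<forall>T\<in>S. \<forall>U\<in>S. T o\<^sub>L U = U o\<^sub>L T)"

end

theory Submission
  imports Defs
begin

lemma lprod_Cons: "ys \<noteq> [] \<Longrightarrow> lprod (x # ys) = x * lprod ys"
  by (cases ys) auto

lemma lprod_append: "xs \<noteq> [] \<Longrightarrow> ys \<noteq> [] \<Longrightarrow>
   lprod (xs @ ys) = (lprod xs :: 'a::semigroup_mult) * lprod ys"
proof (induction xs)
  case Nil then show ?case by simp
next
  case (Cons x xs)
  show ?case
  proof (cases "xs = []")
    case True then show ?thesis using Cons by (simp add: lprod_Cons)
  next
    case False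
    then show ?thesis using Cons by (simp add: lprod_Cons mult.assoc)
  qed
qed

lemma lprod_rep_central:
  assumes "a0 \<in> (center :: 'a::semigroup_mult set)" "k \<ge> 1"
  shows "lprod (replicate k a0) * z = z * lprod (replicate k a0)"
  using assms(2)
proof (induction k rule: dec_induct)
  case base then show ?case using assms(1) by (simp add: center_def)
next
  case (step k)
  have "lprod (replicate (Suc k) a0) = a0 * lprod (replicate k a0)"
    using step by (cases k) auto
  have a: "a0 * w = w * a0" for w using assms(1) by (simp add: center_def)
  have "a0 * lprod (replicate k a0) * z = a0 * (z * lprod (replicate k a0))"
    using step.IH by (simp add: mult.assoc)
  also have "\<dots> = (a0 * z) * lprod (replicate k a0)" by (simp add: mult.assoc)
  also have "\<dots> = z * (a0 * lprod (replicate k a0))" by (simp add: a mult.assoc)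
  finally show ?case using \<open>lprod (replicate (Suc k) a0) = _\<close> by simp
qed

locale mtsetup =
  fixes a0 :: "'a::real_normed_algebra" and n :: nat
  assumes cen: "a0 \<in> center" and n3: "n \<ge> 3"
begin

definition "c = lprod (replicate (n - 2) a0)"

lemma c_central: "c * z = z * c"
  unfolding c_def using lprod_rep_central[OF cen, of "n-2"] n3 by simp

lemma F1:
  assumes T: "T \<in> Mul_n n"
  shows "blinfun_apply T (x * (c * y)) = x * blinfun_apply T (c * y)"
proof -
  let ?xs = "x # (replicate (n - 2) a0 @ [y])"
  have len: "length ?xs = n" using n3 by simp
  have rne: "replicate (n - 2) a0 \<noteq> []" using n3 by simp
  have "lprod ?xs = x * (c * y)"
    using rne by (simp add: lprod_Cons lprod_append c_def)
  moreover have "lprod (tl ?xs) = c * y"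
    using rne by (simp add: lprod_append c_def)
  moreover have "blinfun_apply T (lprod ?xs) = hd ?xs * blinfun_apply T (lprod (tl ?xs))"
    using T len unfolding Mul_n_def by blast
  ultimately show ?thesis by simp
qed

lemma F2:
  assumes T: "T \<in> Mul_n n"
  shows "blinfun_apply T ((c * x) * y) = blinfun_apply T (c * x) * y"
proof -
  let ?xs = "replicate (n - 2) a0 @ [x, y]"
  have len: "length ?xs = n" using n3 by simp
  have rne: "replicate (n - 2) a0 \<noteq> []" using n3 by simp
  have "lprod ?xs = (c * x) * y"
    using rne by (simp add: lprod_append c_def mult.assoc)
  moreover have "butlast ?xs = replicate (n - 2) a0 @ [x]"
    by (simp add: butlast_append)
  moreover have "lprod (replicate (n - 2) a0 @ [x]) = c * x"
    using rne by (simp add: lprod_append c_def)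
  moreover have "last ?xs = y" by simp
  moreover have "blinfun_apply T (lprod ?xs) = blinfun_apply T (lprod (butlast ?xs)) * last ?xs"
    using T len unfolding Mul_n_def by blast
  ultimately show ?thesis by simp
qed

definition "Tp T = T o\<^sub>L blinfun_mult_right c"

lemma Tp_apply: "blinfun_apply (Tp T) x = blinfun_apply T (c * x)"
  unfolding Tp_def by (simp add: c_central)

lemma Tp_right: "T \<in> Mul_n n \<Longrightarrow> blinfun_apply (Tp T) (x * y) = blinfun_apply (Tp T) x * y"
  by (simp add: Tp_apply F2 mult.assoc[symmetric])

lemma Tp_left: "T \<in> Mul_n n \<Longrightarrow> blinfun_apply (Tp T) (x * y) = x * blinfun_apply (Tp T) y"
proof -
  assume T: "T \<in> Mul_n n"
  have "c * (x * y) = x * (c * y)" by (metis c_central mult.assoc)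
  then show ?thesis by (simp add: Tp_apply F1[OF T])
qed

lemma Tp_comm:
  assumes ann: "left_ann = ({0} :: 'a set)" and T: "T \<in> Mul_n n" and U: "U \<in> Mul_n n"
  shows "Tp T o\<^sub>L Tp U = Tp U o\<^sub>L Tp T"
proof (rule blinfun_eqI)
  fix a
  let ?t = "blinfun_apply (Tp T)" and ?u = "blinfun_apply (Tp U)"
  have "\<forall>b. (?t (?u a) - ?u (?t a)) * b = 0"
  proof
    fix b
    have "?t (?u a) * b = ?t (?u a * b)" using Tp_right[OF T] by simp
    also have "\<dots> = ?t (?u (a * b))" using Tp_right[OF U] by simp
    also have "\<dots> = ?t (a * ?u b)" using Tp_left[OF U] by simp
    also have "\<dots> = ?t a * ?u b" using Tp_right[OF T] by simp
    finally have e1: "?t (?u a) * b = ?t a * ?u b" .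
    have "?u (?t a) * b = ?u (?t a * b)" using Tp_right[OF U] by simp
    also have "\<dots> = ?t a * ?u b" using Tp_left[OF U] by simp
    finally have e2: "?u (?t a) * b = ?t a * ?u b" .
    show "(?t (?u a) - ?u (?t a)) * b = 0" using e1 e2 by (simp add: left_diff_distrib)
  qed
  then have "?t (?u a) - ?u (?t a) \<in> left_ann" by (simp add: left_ann_def)
  then show "blinfun_apply (Tp T o\<^sub>L Tp U) a = blinfun_apply (Tp U o\<^sub>L Tp T) a"
  proof -
    have "?t (?u a) - ?u (?t a) = 0" using ann \<open>?t (?u a) - ?u (?t a) \<in> left_ann\<close> by blast
    then show ?thesis by simp
  qed
qed

lemma V_mul:
  assumes T: "T \<in> Mul_n n" and U: "U \<in> Mul_n n"
  shows "Tp T o\<^sub>L U \<in> Mul_n n"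
  unfolding Mul_n_def
proof (intro CollectI allI impI conjI)
  fix xs :: "'a list" assume len: "length xs = n"
  have u1: "blinfun_apply U (lprod xs) = hd xs * blinfun_apply U (lprod (tl xs))"
   and u2: "blinfun_apply U (lprod xs) = blinfun_apply U (lprod (butlast xs)) * last xs"
    using U len unfolding Mul_n_def by auto
  have "c * (hd xs * w) = hd xs * (c * w)" for w by (metis c_central mult.assoc)
  then show "blinfun_apply (Tp T o\<^sub>L U) (lprod xs) = hd xs * blinfun_apply (Tp T o\<^sub>L U) (lprod (tl xs))"
    by (simp add: u1 Tp_apply F1[OF T])
  show "blinfun_apply (Tp T o\<^sub>L U) (lprod xs) = blinfun_apply (Tp T o\<^sub>L U) (lprod (butlast xs)) * last xs"
    by (simp add: u2 Tp_apply F2[OF T] mult.assoc[symmetric])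
qed

lemma M_eq: "M_a0n a0 n = Tp ` Mul_n n"
  unfolding M_a0n_def T_a0n_def Tp_def c_def by simp

lemma M_comp: "T \<in> Mul_n n \<Longrightarrow> U \<in> Mul_n n \<Longrightarrow> Tp T o\<^sub>L Tp U = Tp (Tp T o\<^sub>L U)"
  unfolding Tp_def by (intro blinfun_eqI) simp

lemma Mul_subspace: "subspace (Mul_n n :: ('a \<Rightarrow>\<^sub>L 'a) set)"
  unfolding subspace_def
proof (intro conjI ballI allI)
  show "0 \<in> Mul_n n" by (simp add: Mul_n_def)
next
  fix x y :: "'a \<Rightarrow>\<^sub>L 'a" assume x: "x \<in> Mul_n n" and y: "y \<in> Mul_n n"
  show "x + y \<in> Mul_n n" unfolding Mul_n_def
  proof (intro CollectI allI impI conjI)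
    fix xs :: "'a list" assume l: "length xs = n"
    have a: "blinfun_apply x (lprod xs) = hd xs * blinfun_apply x (lprod (tl xs))"
      "blinfun_apply x (lprod xs) = blinfun_apply x (lprod (butlast xs)) * last xs"
      "blinfun_apply y (lprod xs) = hd xs * blinfun_apply y (lprod (tl xs))"
      "blinfun_apply y (lprod xs) = blinfun_apply y (lprod (butlast xs)) * last xs"
      using x y l unfolding Mul_n_def by blast+
    show "blinfun_apply (x + y) (lprod xs) = hd xs * blinfun_apply (x + y) (lprod (tl xs))"
      using a(1,3) by (simp add: plus_blinfun.rep_eq distrib_left)
    show "blinfun_apply (x + y) (lprod xs) = blinfun_apply (x + y) (lprod (butlast xs)) * last xs"
      using a(2,4) by (simp add: plus_blinfun.rep_eq distrib_right)
  qed
next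
  fix r :: real and x :: "'a \<Rightarrow>\<^sub>L 'a" assume x: "x \<in> Mul_n n"
  show "r *\<^sub>R x \<in> Mul_n n" unfolding Mul_n_def
  proof (intro CollectI allI impI conjI)
    fix xs :: "'a list" assume l: "length xs = n"
    have a: "blinfun_apply x (lprod xs) = hd xs * blinfun_apply x (lprod (tl xs))"
      "blinfun_apply x (lprod xs) = blinfun_apply x (lprod (butlast xs)) * last xs"
      using x l unfolding Mul_n_def by blast+
    show "blinfun_apply (r *\<^sub>R x) (lprod xs) = hd xs * blinfun_apply (r *\<^sub>R x) (lprod (tl xs))"
      using a(1) by (simp add: scaleR_blinfun.rep_eq)
    show "blinfun_apply (r *\<^sub>R x) (lprod xs) = blinfun_apply (r *\<^sub>R x) (lprod (butlast xs)) * last xs"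
      using a(2) by (simp add: scaleR_blinfun.rep_eq)
  qed
qed

lemma Tp_linear: "linear Tp"
  by (intro linearI; rule blinfun_eqI; simp add: Tp_def plus_blinfun.rep_eq scaleR_blinfun.rep_eq)

end

lemma closure_seqI:
  fixes l :: "'b::first_countable_topology"
  assumes "\<forall>k. s k \<in> S" "s \<longlonglongrightarrow> l" shows "l \<in> closure S"
  unfolding closure_sequential using assms by blast

lemma closure_subspace':
  fixes S :: "'b::real_normed_vector set"
  assumes "subspace S" shows "subspace (closure S)"
  unfolding subspace_def
proof (intro conjI ballI allI)
  show "0 \<in> closure S" using assms subspace_0 closure_subset by blast
next
  fix x y assume x: "x \<in> closure S" and y: "y \<in> closure S"
  obtain f where f: "\<forall>k. f k \<in> S" "f \<longlonglongrightarrow> x" using x unfolding closure_sequential by blast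
  obtain g where g: "\<forall>k. g k \<in> S" "g \<longlonglongrightarrow> y" using y unfolding closure_sequential by blast
  have l: "(\<lambda>k. f k + g k) \<longlonglongrightarrow> x + y" by (intro tendsto_add f(2) g(2))
  have m: "\<forall>k. f k + g k \<in> S" by (simp add: f(1) g(1) subspace_add[OF assms])
  show "x + y \<in> closure S" by (rule closure_seqI[OF m l])
next
  fix r and x assume x: "x \<in> closure S"
  obtain f where f: "\<forall>k. f k \<in> S" "f \<longlonglongrightarrow> x" using x unfolding closure_sequential by blast
  have l: "(\<lambda>k. r *\<^sub>R f k) \<longlonglongrightarrow> r *\<^sub>R x" by (intro tendsto_scaleR tendsto_const f(2))
  have m: "\<forall>k. r *\<^sub>R f k \<in> S" by (simp add: f(1) subspace_scale[OF assms])
  show "r *\<^sub>R x \<in> closure S" by (rule closure_seqI[OF m l])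
qed

lemma closure_comp:
  fixes M :: "('b::real_normed_vector \<Rightarrow>\<^sub>L 'b) set"
  assumes "\<forall>T\<in>M. \<forall>U\<in>M. T o\<^sub>L U \<in> M"
  shows "\<forall>T\<in>closure M. \<forall>U\<in>closure M. T o\<^sub>L U \<in> closure M"
proof (intro ballI)
  fix x y assume x: "x \<in> closure M" and y: "y \<in> closure M"
  obtain f where f: "\<forall>k. f k \<in> M" "f \<longlonglongrightarrow> x" using x unfolding closure_sequential by blast
  obtain g where g: "\<forall>k. g k \<in> M" "g \<longlonglongrightarrow> y" using y unfolding closure_sequential by blast
  have "(\<lambda>k. f k o\<^sub>L g k) \<longlonglongrightarrow> (x o\<^sub>L y)"
    using bounded_bilinear.tendsto[OF bounded_bilinear_blinfun_compose f(2) g(2)] .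
  moreover have "\<forall>k. f k o\<^sub>L g k \<in> M" using f(1) g(1) assms by blast
  ultimately show "x o\<^sub>L y \<in> closure M" by (intro closure_seqI)
qed

lemma closure_commute:
  fixes M :: "('b::real_normed_vector \<Rightarrow>\<^sub>L 'b) set"
  assumes "\<forall>T\<in>M. \<forall>U\<in>M. T o\<^sub>L U = U o\<^sub>L T"
  shows "\<forall>T\<in>closure M. \<forall>U\<in>closure M. T o\<^sub>L U = U o\<^sub>L T"
proof (intro ballI)
  fix x y assume x: "x \<in> closure M" and y: "y \<in> closure M"
  obtain f where f: "\<forall>k. f k \<in> M" "f \<longlonglongrightarrow> x" using x unfolding closure_sequential by blast
  obtain g where g: "\<forall>k. g k \<in> M" "g \<longlonglongrightarrow> y" using y unfolding closure_sequential by blast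
  have l1: "(\<lambda>k. f k o\<^sub>L g k) \<longlonglongrightarrow> (x o\<^sub>L y)"
    using bounded_bilinear.tendsto[OF bounded_bilinear_blinfun_compose f(2) g(2)] .
  have l2: "(\<lambda>k. g k o\<^sub>L f k) \<longlonglongrightarrow> (y o\<^sub>L x)"
    using bounded_bilinear.tendsto[OF bounded_bilinear_blinfun_compose g(2) f(2)] .
  have e: "(\<lambda>k. f k o\<^sub>L g k) = (\<lambda>k. g k o\<^sub>L f k)"
  proof (rule ext)
    fix k show "f k o\<^sub>L g k = g k o\<^sub>L f k" using f(1) g(1) assms by blast
  qed
  have l3: "(\<lambda>k. f k o\<^sub>L g k) \<longlonglongrightarrow> (y o\<^sub>L x)" unfolding e by (rule l2)
  show "x o\<^sub>L y = y o\<^sub>L x" using LIMSEQ_unique[OF l1 l3] .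
qed

theorem mainTheorem9:
  fixes a0 :: "'a::{real_normed_algebra, banach}" and n :: nat
  assumes "left_ann = ({0} :: 'a set)"
    and "a0 \<in> center" and "a0 \<noteq> 0"
    and "n \<ge> 3"
  shows "comm_banach_subalgebra (S_n a0 n)"
proof -
  interpret mtsetup a0 n using assms by unfold_locales
  have sub: "subspace (M_a0n a0 n)"
    unfolding M_eq using linear_subspace_image[OF Tp_linear Mul_subspace] .
  have comp: "\<forall>T\<in>M_a0n a0 n. \<forall>U\<in>M_a0n a0 n. T o\<^sub>L U \<in> M_a0n a0 n"
    unfolding M_eq using M_comp V_mul by auto
  have comm: "\<forall>T\<in>M_a0n a0 n. \<forall>U\<in>M_a0n a0 n. T o\<^sub>L U = U o\<^sub>L T"
    unfolding M_eq using Tp_comm[OF assms(1)] by auto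
  show ?thesis unfolding comm_banach_subalgebra_def S_n_def
    using closure_subspace'[OF sub] closure_comp[OF comp] closure_commute[OF comm] closed_closure by blast
qed

end
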